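(* Let $\langle A;\cdot\rangle$ be a semigroup which is an Abelian algebra and satisfies condition $( * )$. Then: (1) the relations $X$ and $Y$ restricted to $A\cdot A$ are equivalence relations on $A\cdot A$; (2) for all idempotents $e,f\in A$ we have $\Phi_e\cap\Psi_f=\{ef\}$, and $ef$ is an idempotent; (3) for every $a\in A\cdot A$ there exist idempotents $e,f\in A$ such that $a\in X_e\cap Y_f$, and $X_e\cap Y_f=Z_{ef}$.
   Context: $A\cdot A=\{xy\mid x,y\in A\}$; an idempotent is $e$ with $ee=e$. Condition $( * )$: either ($bcA=bA$ and $Abc=Ac$ for all $b,c\in A$), or the set $A\cdot A$ is finite. Relations on $A$: $x\,\Phi\,y\iff\exists z\,(xz=yz)$; $x\,\Psi\,y\iff\exists z\,(zx=zy)$; $x\,X\,y\iff\exists z\,(zx=x\wedge zy=y\wedge z^2=z)$; $x\,Y\,y\iff\exists z\,(xz=x\wedge yz=y\wedge z^2=z)$; $x\,Z\,y\iff (x\,X\,y\wedge x\,Y\,y)$. For an equivalence (or relation) $\Theta$ and $a\in A\cdot A$, $\Theta_a$ denotes $\{x\in A\cdot A\mid x\,\Theta\,a\}$. A polynomial operation of an algebra is an operation obtained from a term by substituting elements of the algebra for some of its variables. An algebra is called Abelian if for every polynomial operation $t(x,y_1,\ldots,y_n)$ and all elements $u,v,c_1,\ldots,c_n,d_1,\ldots,d_n$ of the algebra, $t(u,c_1,\ldots,c_n)=t(u,d_1,\ldots,d_n)$ implies $t(v,c_1,\ldots,c_n)=t(v,d_1,\ldots,d_n)$. *)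

theory Defs
  imports Main
begin

definition sq :: "'a::semigroup_mult set" where
  "sq = {x * y | x y. True}"

definition idem :: "'a::semigroup_mult \<Rightarrow> bool" where
  "idem e \<longleftrightarrow> e * e = e"

definition condStar :: "'a::semigroup_mult itself \<Rightarrow> bool" where
  "condStar _ \<longleftrightarrow>
     (\<forall>b c::'a. {b * c * x | x. True} = {b * x | x. True}
              \<and> {x * (b * c) | x. True} = {x * c | x. True})
     \<or> finite (sq :: 'a set)"

text \<open>Terms of the semigroup signature with constants (polynomials).
  Variable 0 plays the role of x, the other variables the parameters y_i.\<close>
datatype 'a sterm = V nat | C 'a | M "'a sterm" "'a sterm"

primrec seval :: "'a sterm \<Rightarrow> (nat \<Rightarrow> 'a) \<Rightarrow> 'a::semigroup_mult" where
  "seval (V i) \<rho> = \<rho> i"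
| "seval (C a) \<rho> = a"
| "seval (M s t) \<rho> = seval s \<rho> * seval t \<rho>"

definition abelian_alg :: "'a::semigroup_mult itself \<Rightarrow> bool" where
  "abelian_alg _ \<longleftrightarrow>
     (\<forall>(t::'a sterm) (u::'a) v (c::nat \<Rightarrow> 'a) d.
        seval t (c(0 := u)) = seval t (d(0 := u)) \<longrightarrow>
        seval t (c(0 := v)) = seval t (d(0 := v)))"

definition relPhi :: "'a::semigroup_mult \<Rightarrow> 'a \<Rightarrow> bool" where
  "relPhi x y \<longleftrightarrow> (\<exists>z. x * z = y * z)"
definition relPsi :: "'a::semigroup_mult \<Rightarrow> 'a \<Rightarrow> bool" where
  "relPsi x y \<longleftrightarrow> (\<exists>z. z * x = z * y)"
definition relX :: "'a::semigroup_mult \<Rightarrow> 'a \<Rightarrow> bool" where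
  "relX x y \<longleftrightarrow> (\<exists>z. z * x = x \<and> z * y = y \<and> z * z = z)"
definition relY :: "'a::semigroup_mult \<Rightarrow> 'a \<Rightarrow> bool" where
  "relY x y \<longleftrightarrow> (\<exists>z. x * z = x \<and> y * z = y \<and> z * z = z)"
definition relZ :: "'a::semigroup_mult \<Rightarrow> 'a \<Rightarrow> bool" where
  "relZ x y \<longleftrightarrow> relX x y \<and> relY x y"

definition cls :: "('a::semigroup_mult \<Rightarrow> 'a \<Rightarrow> bool) \<Rightarrow> 'a \<Rightarrow> 'a set" where
  "cls R a = {x \<in> sq. R x a}"

definition restr :: "('a::semigroup_mult \<Rightarrow> 'a \<Rightarrow> bool) \<Rightarrow> ('a \<times> 'a) set" where
  "restr R = {(x, y). x \<in> sq \<and> y \<in> sq \<and> R x y}"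

end

theory Submission
  imports Defs
begin

lemma abR:
  assumes A: "abelian_alg TYPE('a::semigroup_mult)" and h: "c * u = d * (u::'a)"
  shows "c * v = d * v"
proof -
  have "seval (M (V 1) (V 0)) ((\<lambda>_. c)(0:=u)) = seval (M (V 1) (V 0)) ((\<lambda>_. d)(0:=u))"
    using h by simp
  then have "seval (M (V 1) (V 0)) ((\<lambda>_. c)(0:=v)) = seval (M (V 1) (V 0)) ((\<lambda>_. d)(0:=v))"
    using A unfolding abelian_alg_def by blast
  thus ?thesis by simp
qed

lemma abL:
  assumes A: "abelian_alg TYPE('a::semigroup_mult)" and h: "u * c = u * (d::'a)"
  shows "v * c = v * d"
proof -
  have "seval (M (V 0) (V 1)) ((\<lambda>_. c)(0:=u)) = seval (M (V 0) (V 1)) ((\<lambda>_. d)(0:=u))"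
    using h by simp
  then have "seval (M (V 0) (V 1)) ((\<lambda>_. c)(0:=v)) = seval (M (V 0) (V 1)) ((\<lambda>_. d)(0:=v))"
    using A unfolding abelian_alg_def by blast
  thus ?thesis by simp
qed

lemma idem_R:
  assumes A: "abelian_alg TYPE('a::semigroup_mult)" and h: "a * g = (a::'a)"
  shows "\<exists>e. idem e \<and> a * e = a"
proof -
  have "a * g = a * (g * g)" using h by (metis mult.assoc)
  then have hg: "g * g = g * (g * g)" using abL[OF A] by blast
  have "idem (g * g)" unfolding idem_def by (metis mult.assoc hg)
  moreover have "a * (g * g) = a" using h by (metis mult.assoc)
  ultimately show ?thesis by blast
qed

lemma idem_L:
  assumes A: "abelian_alg TYPE('a::semigroup_mult)" and h: "g * a = (a::'a)"
  shows "\<exists>e. idem e \<and> e * a = a"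
proof -
  have "g * a = (g * g) * a" using h by (metis mult.assoc)
  then have hg: "g * g = (g * g) * g" using abR[OF A] by blast
  have "idem (g * g)" unfolding idem_def by (metis mult.assoc hg)
  moreover have "(g * g) * a = a" using h by (metis mult.assoc)
  ultimately show ?thesis by blast
qed

primrec pw :: "'a::semigroup_mult \<Rightarrow> nat \<Rightarrow> 'a" where
  "pw c 0 = c"
| "pw c (Suc n) = pw c n * c"

lemma pw_add: "pw c (m + n + 1) = pw c m * pw c n"
  by (induction n) (simp_all add: mult.assoc)

lemma pw_noninj:
  assumes F: "finite (sq :: 'a::semigroup_mult set)"
  shows "\<exists>i k. pw (c::'a) (Suc i) = pw c (Suc (i + k + 1))"
proof -
  let ?f = "\<lambda>n. pw c (Suc n)"
  have "range ?f \<subseteq> sq" unfolding sq_def by auto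
  then have "finite (range ?f)" using F finite_subset by blast
  then have "\<not> inj ?f" using finite_imageD by fastforce
  then obtain i j where ij: "i \<noteq> j" "?f i = ?f j" unfolding inj_def by blast
  show ?thesis
  proof (cases "i < j")
    case True
    then have "j = i + (j - i - 1) + 1" by simp
    then show ?thesis using ij by metis
  next
    case False
    then have "i = j + (i - j - 1) + 1" using ij by simp
    then show ?thesis using ij by metis
  qed
qed

lemma rid:
  assumes A: "abelian_alg TYPE('a::semigroup_mult)" and S: "condStar TYPE('a)"
    and a: "(a::'a) \<in> sq"
  shows "\<exists>g. a * g = a"
proof -
  obtain b c where abc: "a = b * c" using a unfolding sq_def by blast
  show ?thesis
  proof (cases "finite (sq :: 'a set)")
    case True
    then obtain i k where e: "pw c (Suc i) = pw c (Suc (i + k + 1))" using pw_noninj by blast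
    have "pw c (Suc (i + k + 1)) = pw c (i + (k+1) + 1)" by simp
    also have "\<dots> = pw c i * pw c (k+1)" by (rule pw_add)
    finally have "pw c i * c = pw c i * pw c (k + 1)" using e by simp
    then have "b * c = b * pw c (k+1)" using abL[OF A] by blast
    also have "pw c (k+1) = c * pw c k" using pw_add[of c 0 k] by simp
    finally show ?thesis using abc by (metis mult.assoc)
  next
    case False
    then have "{b * c * x | x. True} = {b * x | x. True}" using S unfolding condStar_def by blast
    moreover have "b * c \<in> {b * x | x. True}" by blast
    ultimately have "b * c \<in> {b * c * x | x. True}" by simp
    then obtain x where "b * c = b * c * x" by blast
    then show ?thesis using abc by metis
  qed
qed

lemma lid:
  assumes A: "abelian_alg TYPE('a::semigroup_mult)" and S: "condStar TYPE('a)"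
    and a: "(a::'a) \<in> sq"
  shows "\<exists>g. g * a = a"
proof -
  obtain b c where abc: "a = b * c" using a unfolding sq_def by blast
  show ?thesis
  proof (cases "finite (sq :: 'a set)")
    case True
    then obtain i k where e: "pw b (Suc i) = pw b (Suc (i + k + 1))" using pw_noninj by blast
    have "Suc (i + k + 1) = (k+1) + i + 1" by simp
    then have "pw b (Suc (i + k + 1)) = pw b ((k+1) + i + 1)" by metis
    also have "\<dots> = pw b (k+1) * pw b i" by (rule pw_add)
    finally have e2: "pw b (Suc i) = pw b (k+1) * pw b i" using e by simp
    have "pw b (Suc i) = b * pw b i" using pw_add[of b 0 i] by simp
    with e2 have "b * pw b i = pw b (k + 1) * pw b i" by simp
    then have "b * c = pw b (k+1) * c" using abR[OF A] by blast
    then show ?thesis using abc by (metis mult.assoc pw.simps(2) Suc_eq_plus1)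
  next
    case False
    then have "{x * (b * c) | x. True} = {x * c | x. True}" using S unfolding condStar_def by blast
    moreover have "b * c \<in> {x * c | x. True}" by blast
    ultimately have "b * c \<in> {x * (b * c) | x. True}" by simp
    then obtain x where "b * c = x * (b * c)" by blast
    then show ?thesis using abc by metis
  qed
qed

theorem mainTheorem13:
  assumes "abelian_alg TYPE('a::semigroup_mult)"
      and "condStar TYPE('a)"
  shows "equiv (sq :: 'a set) (restr relX) \<and> equiv (sq :: 'a set) (restr relY)
    \<and> (\<forall>e f :: 'a. idem e \<and> idem f \<longrightarrow>
          cls relPhi e \<inter> cls relPsi f = {e * f} \<and> idem (e * f))
    \<and> (\<forall>a :: 'a. a \<in> sq \<longrightarrow>
          (\<exists>e f. idem e \<and> idem f \<and> a \<in> cls relX e \<inter> cls relY f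
                 \<and> cls relX e \<inter> cls relY f = cls relZ (e * f)))"
proof -
  note A = assms(1) and S = assms(2)
  have LI: "\<exists>e. idem e \<and> e * a = a" if "a \<in> sq" for a :: 'a
    using lid[OF A S that] idem_L[OF A] by blast
  have RI: "\<exists>e. idem e \<and> a * e = a" if "a \<in> sq" for a :: 'a
    using rid[OF A S that] idem_R[OF A] by blast
  have eqX: "equiv (sq :: 'a set) (restr relX)"
  proof (rule equivI)
    show "restr (relX::'a\<Rightarrow>'a\<Rightarrow>bool) \<subseteq> sq \<times> sq" unfolding restr_def by blast
    show "refl_on (sq::'a set) (restr relX)"
      unfolding refl_on_def
    proof (intro ballI)
      fix x :: 'a assume "x \<in> sq"
      then obtain e where "idem e" "e * x = x" using LI by blast
      then show "(x, x) \<in> restr relX"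
        using \<open>x \<in> sq\<close> unfolding idem_def restr_def relX_def by auto
    qed
    show "sym (restr (relX::'a\<Rightarrow>'a\<Rightarrow>bool))" unfolding sym_def restr_def relX_def by blast
    have K: "\<And>z y z' w::'a. z * y = y \<Longrightarrow> z' * y = y \<Longrightarrow> z' * w = w \<Longrightarrow> z * w = w" using abR[OF A] by metis
    show "trans (restr (relX::'a\<Rightarrow>'a\<Rightarrow>bool))"
      unfolding trans_def restr_def relX_def using K by blast
  qed
  have eqY: "equiv (sq :: 'a set) (restr relY)"
  proof (rule equivI)
    show "restr (relY::'a\<Rightarrow>'a\<Rightarrow>bool) \<subseteq> sq \<times> sq" unfolding restr_def by blast
    show "refl_on (sq::'a set) (restr relY)"
      unfolding refl_on_def
    proof (intro ballI)
      fix x :: 'a assume "x \<in> sq"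
      then obtain e where "idem e" "x * e = x" using RI by blast
      then show "(x, x) \<in> restr relY"
        using \<open>x \<in> sq\<close> unfolding idem_def restr_def relY_def by auto
    qed
    show "sym (restr (relY::'a\<Rightarrow>'a\<Rightarrow>bool))" unfolding sym_def restr_def relY_def by blast
    have K: "\<And>z y z' w::'a. y * z = y \<Longrightarrow> y * z' = y \<Longrightarrow> w * z' = w \<Longrightarrow> w * z = w" using abL[OF A] by metis
    show "trans (restr (relY::'a\<Rightarrow>'a\<Rightarrow>bool))"
      unfolding trans_def restr_def relY_def using K by blast
  qed
  have P2: "cls relPhi e \<inter> cls relPsi f = {e * f} \<and> idem (e * f)"
    if ie: "idem e" and iff: "idem f" for e f :: 'a
  proof -
    have ee: "e * e = e" and ff: "f * f = f" using ie iff unfolding idem_def by auto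
    have sub: "cls relPhi e \<inter> cls relPsi f \<subseteq> {e * f}"
    proof
      fix x assume "x \<in> cls relPhi e \<inter> cls relPsi f"
      then have xs: "x \<in> sq" and "\<exists>z. x * z = e * z" and "\<exists>z. z * x = z * f"
        unfolding cls_def relPhi_def relPsi_def by auto
      then obtain z z' where h1: "x * z = e * z" and h2: "z' * x = z' * f" by blast
      have Phi: "x * v = e * v" for v using abR[OF A h1] .
      have Psi: "v * x = v * f" for v using abL[OF A h2] .
      obtain g where g: "x * g = x" using RI[OF xs] by blast
      have "x = e * g" using g Phi[of g] by simp
      then have "e * x = x" using ee by (metis mult.assoc)
      then have "x = e * f" using Psi[of e] by simp
      then show "x \<in> {e * f}" by simp
    qed
    have "e * f \<in> cls relPhi e \<inter> cls relPsi f"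
      unfolding cls_def relPhi_def relPsi_def sq_def
      using ee ff by (metis (mono_tags, lifting) IntI mem_Collect_eq mult.assoc)
    with sub have eq: "cls relPhi e \<inter> cls relPsi f = {e * f}" by blast
    have "e * f * (e * f) = e * f"
    proof -
      have "e * f * f = e * f" using ff by (metis mult.assoc)
      then have "e * f * v = e * v" for v using abR[OF A, of "e * f" f e] ff by (metis mult.assoc)
      then have "e * f * (e * f) = e * (e * f)" by blast
      then show ?thesis using ee by (metis mult.assoc)
    qed
    then show ?thesis using eq unfolding idem_def by simp
  qed
  have P3: "\<exists>e f. idem e \<and> idem f \<and> a \<in> cls relX e \<inter> cls relY f
                 \<and> cls relX e \<inter> cls relY f = cls relZ (e * f)" if a: "a \<in> sq" for a :: 'a
  proof -
    obtain e where e: "idem e" "e * a = a" using LI[OF a] by blast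
    obtain f where f: "idem f" "a * f = a" using RI[OF a] by blast
    have ee: "e * e = e" and ff: "f * f = f" using e f unfolding idem_def by auto
    have ain: "a \<in> cls relX e \<inter> cls relY f"
      unfolding cls_def relX_def relY_def using a e f ee ff by auto
    have "cls relX e \<inter> cls relY f \<subseteq> cls relZ (e * f)"
    proof
      fix x assume "x \<in> cls relX e \<inter> cls relY f"
      then have xs: "x \<in> sq" and "\<exists>z. z * x = x \<and> z * e = e \<and> z * z = z"
        and "\<exists>z. x * z = x \<and> f * z = f \<and> z * z = z"
        unfolding cls_def relX_def relY_def by auto
      then obtain z z' where "z * x = x" "z * e = e" "z * z = z"
        "x * z' = x" "f * z' = f" "z' * z' = z'" by blast
      then have "relX x (e * f)" "relY x (e * f)" unfolding relX_def relY_def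
        by (metis mult.assoc)+
      then show "x \<in> cls relZ (e * f)" unfolding cls_def relZ_def using xs by auto
    qed
    moreover have "cls relZ (e * f) \<subseteq> cls relX e \<inter> cls relY f"
    proof
      fix x assume "x \<in> cls relZ (e * f)"
      then have xs: "x \<in> sq" and "\<exists>z. z * x = x \<and> z * (e * f) = e * f \<and> z * z = z"
        and "\<exists>z. x * z = x \<and> (e * f) * z = e * f \<and> z * z = z"
        unfolding cls_def relZ_def relX_def relY_def by auto
      then obtain z z' where z: "z * x = x" "z * (e * f) = e * f" "z * z = z"
        and z': "x * z' = x" "(e * f) * z' = e * f" "z' * z' = z'" by blast
      have "z * (e * f) = e * (e * f)" using z ee by (metis mult.assoc)
      then have "z * x = e * x" using abR[OF A] by blast
      then have ex: "e * x = x" using z by simp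
      have "(e * f) * z' = (e * f) * f" using z' ff by (metis mult.assoc)
      then have "x * z' = x * f" using abL[OF A] by blast
      then have xf: "x * f = x" using z' by simp
      show "x \<in> cls relX e \<inter> cls relY f"
        unfolding cls_def relX_def relY_def using xs ex xf ee ff by auto
    qed
    ultimately show ?thesis using e(1) f(1) ain by blast
  qed
  show ?thesis using eqX eqY P2 P3 by blast
qed

end
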